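(* Let $\tau\ge1$ and consider two candidates $P,Q$, where only the preferred candidate of each voter with preference strength at least $\tau$ is known. Weighted Majority Rule 3 (defined in the context) has distortion at most $\max\{\frac{\tau+2}{\tau},\tau\}$, and no deterministic mechanism using only this information can achieve a smaller worst-case distortion.
   Context: Voters $N=\{1,\dots,n\}$ and candidates are points of an arbitrary metric space $(X,d)$. Voter $i$ prefers $P$ to $Q$ only if $d(i,P)\le d(i,Q)$; $SC(Y)=\sum_{i\in N}d(i,Y)$; distortion of a winner is its social cost divided by the minimum social cost over the candidates, and a mechanism's distortion is the supremum over instances. Let $A=\{i: d(i,Q)/d(i,P)\ge\tau\}$, $B=\{j: d(j,P)/d(j,Q)\ge\tau\}$, and $C$ the remaining voters; the available information consists only of the sets $A$ and $B$ (nothing is known about voters in $C$). Weighted Majority Rule 3: voters in $A\cup B$ get weight $1$, voters in $C$ weight $0$; select $P$ if $|A|\ge|B|$ and $Q$ otherwise. *)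

theory Defs
  imports Complex_Main
begin

definition metric_on :: "'a set \<Rightarrow> ('a \<Rightarrow> 'a \<Rightarrow> real) \<Rightarrow> bool" where
  "metric_on X d \<longleftrightarrow>
     (\<forall>x\<in>X. \<forall>y\<in>X. 0 \<le> d x y \<and> (d x y = 0 \<longleftrightarrow> x = y) \<and> d x y = d y x) \<and>
     (\<forall>x\<in>X. \<forall>y\<in>X. \<forall>z\<in>X. d x z \<le> d x y + d y z)"

definition SC :: "('a \<Rightarrow> 'a \<Rightarrow> real) \<Rightarrow> nat \<Rightarrow> (nat \<Rightarrow> 'a) \<Rightarrow> 'a \<Rightarrow> real" where
  "SC d n v Y = (\<Sum>i=1..n. d (v i) Y)"

text \<open>Voters whose preference for P has strength at least tau:
  d(i,Q)/d(i,P) \<ge> tau, written multiplicatively (d(i,P)=0 counts as infinite ratio).\<close>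
definition setA :: "real \<Rightarrow> ('a \<Rightarrow> 'a \<Rightarrow> real) \<Rightarrow> nat \<Rightarrow> (nat \<Rightarrow> 'a) \<Rightarrow> 'a \<Rightarrow> 'a \<Rightarrow> nat set" where
  "setA \<tau> d n v P Q = {i \<in> {1..n}. d (v i) Q \<ge> \<tau> * d (v i) P}"

definition setB :: "real \<Rightarrow> ('a \<Rightarrow> 'a \<Rightarrow> real) \<Rightarrow> nat \<Rightarrow> (nat \<Rightarrow> 'a) \<Rightarrow> 'a \<Rightarrow> 'a \<Rightarrow> nat set" where
  "setB \<tau> d n v P Q = {j \<in> {1..n}. d (v j) P \<ge> \<tau> * d (v j) Q}"

text \<open>Weighted Majority Rule 3: weight 1 on A \<union> B, 0 on C; select P iff |A| \<ge> |B|.\<close>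
definition WMR3 :: "real \<Rightarrow> ('a \<Rightarrow> 'a \<Rightarrow> real) \<Rightarrow> nat \<Rightarrow> (nat \<Rightarrow> 'a) \<Rightarrow> 'a \<Rightarrow> 'a \<Rightarrow> 'a" where
  "WMR3 \<tau> d n v P Q =
     (if card (setA \<tau> d n v P Q) \<ge> card (setB \<tau> d n v P Q) then P else Q)"

definition distortion :: "('a \<Rightarrow> 'a \<Rightarrow> real) \<Rightarrow> nat \<Rightarrow> (nat \<Rightarrow> 'a) \<Rightarrow> 'a \<Rightarrow> 'a \<Rightarrow> 'a \<Rightarrow> real" where
  "distortion d n v P Q W = SC d n v W / min (SC d n v P) (SC d n v Q)"

text \<open>Valid valid_instance: n voters and candidates P, Q are points of the metric space (X,d),
  with positive optimal social cost (so that the distortion ratio is defined).\<close>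
definition valid_instance :: "'a set \<Rightarrow> ('a \<Rightarrow> 'a \<Rightarrow> real) \<Rightarrow> nat \<Rightarrow> (nat \<Rightarrow> 'a) \<Rightarrow> 'a \<Rightarrow> 'a \<Rightarrow> bool" where
  "valid_instance X d n v P Q \<longleftrightarrow> metric_on X d \<and> v ` {1..n} \<subseteq> X \<and> P \<in> X \<and> Q \<in> X \<and>
     0 < min (SC d n v P) (SC d n v Q)"

end

theory Submission imports Defs begin

lemma key_A:
  fixes a b D t M :: real
  assumes "t \<ge> 1" "t*M \<ge> t+2" "t*a \<le> b" "D \<le> a + b" "a \<ge> 0"
  shows "a - M*b \<le> - D"
proof -
  have b0: "b \<ge> 0" using assms by (smt (verit) mult_nonneg_nonneg)
  have "t*(2*a + b) \<le> (t+2)*b" using assms by (simp add: algebra_simps)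
  also have "\<dots> \<le> (t*M)*b" using assms b0 by (simp add: mult_right_mono)
  finally have "t*(2*a + b) \<le> t*(M*b)" by (simp add: algebra_simps)
  then have "2*a+b \<le> M*b" using assms by simp
  then show ?thesis using assms by linarith
qed

lemma sum_ind: "finite S \<Longrightarrow> (\<Sum>i\<in>S. (if i \<in> B then 1 else 0::real)) = real (card (S \<inter> B))"
  by (simp add: sum.If_cases)

lemma upper:
  fixes \<tau> M :: real
  assumes t: "\<tau> \<ge> 1" and Mdef: "M = max ((\<tau> + 2) / \<tau>) \<tau>"
    and met: "metric_on X d" and vX: "v ` {1..n} \<subseteq> X" and PX: "P \<in> X" and QX: "Q \<in> X"
    and card: "card (setB \<tau> d n v P Q) \<le> card (setA \<tau> d n v P Q)"
  shows "SC d n v P \<le> M * SC d n v Q"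
proof -
  let ?A = "setA \<tau> d n v P Q" and ?B = "setB \<tau> d n v P Q"
  define D where "D = d P Q"
  have M1: "M \<ge> 1" "M \<ge> \<tau>" using Mdef t by auto
  have tM: "\<tau> * M \<ge> \<tau> + 2"
  proof -
    have "(\<tau>+2)/\<tau> \<le> M" using Mdef by simp
    then show ?thesis using t by (simp add: field_simps)
  qed
  have pt: "d (v i) P - M * d (v i) Q \<le> D * ((if i \<in> ?B then 1 else 0) - (if i \<in> ?A then 1 else 0))"
    if i: "i \<in> {1..n}" for i
  proof -
    have viX: "v i \<in> X" using vX i by auto
    have a0: "d (v i) P \<ge> 0" and b0: "d (v i) Q \<ge> 0"
      using met viX PX QX unfolding metric_on_def by auto
    have tri1: "d (v i) P \<le> d (v i) Q + D"
      using met viX PX QX unfolding metric_on_def D_def by (metis)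
    have tri2: "D \<le> d (v i) P + d (v i) Q"
      using met viX PX QX unfolding metric_on_def D_def by (metis)
    have D0: "D \<ge> 0" using met PX QX unfolding metric_on_def D_def by auto
    show ?thesis
    proof (cases "i \<in> ?A")
      case True
      then have tA: "\<tau> * d (v i) P \<le> d (v i) Q" unfolding setA_def by auto
      have g: "d (v i) P - M * d (v i) Q \<le> - D" by (rule key_A[OF t tM tA tri2 a0])
      show ?thesis
      proof (cases "i \<in> ?B")
        case True then show ?thesis using g D0 \<open>i \<in> ?A\<close> by auto
      next
        case False then show ?thesis using g \<open>i \<in> ?A\<close> by auto
      qed
    next
      case False
      show ?thesis
      proof (cases "i \<in> ?B")
        case True
        have "1 * d (v i) Q \<le> M * d (v i) Q" by (rule mult_right_mono[OF M1(1) b0])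
        then show ?thesis using True False tri1 by simp
      next
        case nB: False
        then have "d (v i) P < \<tau> * d (v i) Q" using i unfolding setB_def by auto
        also have "\<dots> \<le> M * d (v i) Q" using M1 b0 by (simp add: mult_right_mono)
        finally show ?thesis using False nB by simp
      qed
    qed
  qed
  have "(\<Sum>i=1..n. d (v i) P - M * d (v i) Q) \<le>
        (\<Sum>i=1..n. D * ((if i \<in> ?B then 1 else 0) - (if i \<in> ?A then 1 else 0)))"
    by (rule sum_mono) (use pt in auto)
  also have "\<dots> = D * (real (card ({1..n} \<inter> ?B)) - real (card ({1..n} \<inter> ?A)))"
    by (simp add: sum_distrib_left[symmetric] sum_subtractf sum_ind)
  also have "{1..n} \<inter> ?B = ?B" unfolding setB_def by auto
  also have "{1..n} \<inter> ?A = ?A" unfolding setA_def by auto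
  also have "D * (real (card ?B) - real (card ?A)) \<le> 0"
  proof -
    have D0: "D \<ge> 0" using met PX QX unfolding metric_on_def D_def by auto
    moreover have "real (card ?B) - real (card ?A) \<le> 0" using card by simp
    ultimately show ?thesis by (simp add: mult_nonneg_nonpos)
  qed
  finally have "(\<Sum>i=1..n. d (v i) P - M * d (v i) Q) \<le> 0" .
  then show ?thesis unfolding SC_def by (simp add: sum_subtractf sum_distrib_left)
qed

lemma swapA: "setA \<tau> d n v Q P = setB \<tau> d n v P Q" unfolding setA_def setB_def by simp
lemma swapB: "setB \<tau> d n v Q P = setA \<tau> d n v P Q" unfolding setA_def setB_def by simp

lemma line_metric: "inj_on f X \<Longrightarrow> metric_on X (\<lambda>x y. \<bar>f x - f y\<bar>)"
  unfolding metric_on_def inj_on_def by auto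

lemma SC2: "SC d 2 v Y = d (v 1) Y + d (v 2) Y"
proof -
  have "{1..2::nat} = {1,2}" by auto
  then show ?thesis unfolding SC_def by simp
qed

lemma SC1: "SC d 1 v Y = d (v 1) Y" unfolding SC_def by simp

lemma lowerA:
  fixes \<tau> \<rho> :: real
  assumes t: "\<tau> \<ge> 1" and r: "\<rho> < (\<tau> + 2) / \<tau>"
  shows "\<exists>(X :: nat set) d n v P Q. valid_instance X d n v P Q \<and>
              distortion d n v P Q
                (if mech n (setA \<tau> d n v P Q) (setB \<tau> d n v P Q) then P else Q) > \<rho>"
proof -
  define M0 where "M0 = (\<tau> + 2) / \<tau>"
  define r where "r = (max \<rho> 1 + M0) / 2"
  have M0g: "M0 > 1" using t unfolding M0_def by (simp add: field_simps)
  have mx: "max \<rho> 1 < M0" using M0g r unfolding M0_def by auto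
  have rg: "r > 1" "r < M0" "r > \<rho>" using mx unfolding r_def by auto
  have "r - 1 < 2 / \<tau>" using rg(2) t unfolding M0_def by (simp add: field_simps)
  then have tl: "\<tau> < 2 / (r - 1)" using rg(1) t by (simp add: field_simps)
  define a where "a = (\<tau> + 2 / (r - 1)) / 2"
  have tr: "\<tau> * (r-1) < 2" using tl rg(1) by (simp add: field_simps)
  have aeq: "a * (r-1) = (\<tau>*(r-1) + 2)/2" using rg(1) by (simp add: a_def field_simps)
  have ag1: "a > \<tau>" using tl unfolding a_def by (simp add: less_divide_eq)
  have ag2: "a * (r - 1) < 2" using tr unfolding aeq by (simp add: divide_less_eq)
  note ag = ag1 ag2
  have apos: "a > 0" using ag t by linarith
  have ratio: "(a + 2) / a > \<rho>"
  proof -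
    have "a * r < a + 2" using ag by (simp add: algebra_simps)
    then have "r < (a+2)/a" using apos by (simp add: field_simps)
    then show ?thesis using rg by linarith
  qed
  have ta: "\<not> (1 \<ge> \<tau> * a)" using ag t
    by (smt (verit) mult_less_cancel_left2 mult_le_cancel_right1)
  have pa1: "\<tau> * (a + 1) > 0" using apos t by simp
  define f :: "nat \<Rightarrow> real" where "f = (\<lambda>k. if k = 0 then 0 else if k = 1 then a + 1 else a)"
  define d where "d = (\<lambda>x y. \<bar>f x - f y\<bar>)"
  define X :: "nat set" where "X = {0,1,2}"
  have met: "metric_on X d" unfolding d_def
    by (rule line_metric) (use apos in \<open>auto simp: X_def f_def inj_on_def\<close>)
  have twoset: "{1..2::nat} = {1,2}" by auto
  define v1 :: "nat \<Rightarrow> nat" where "v1 = (\<lambda>i. if i = 1 then 2 else 0)"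
  define v2 :: "nat \<Rightarrow> nat" where "v2 = (\<lambda>i. if i = 2 then 2 else 0)"
  have A1: "setA \<tau> d 2 v1 1 0 = {1}" unfolding setA_def twoset d_def f_def v1_def
    using apos ag t by auto (use pa1 in linarith)
  have B1: "setB \<tau> d 2 v1 1 0 = {2}" unfolding setB_def twoset d_def f_def v1_def
    using apos ag t pa1 ta by auto
  have A2: "setA \<tau> d 2 v2 0 1 = {1}" unfolding setA_def twoset d_def f_def v2_def
    using apos ag t pa1 ta by auto
  have B2: "setB \<tau> d 2 v2 0 1 = {2}" unfolding setB_def twoset d_def f_def v2_def
    using apos ag t by auto (use pa1 in linarith)
  have s1P: "SC d 2 v1 1 = a + 2" and s1Q: "SC d 2 v1 0 = a"
    unfolding SC2 d_def f_def v1_def using apos by auto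
  have s2Q: "SC d 2 v2 1 = a + 2" and s2P: "SC d 2 v2 0 = a"
    unfolding SC2 d_def f_def v2_def using apos by auto
  have val1: "valid_instance X d 2 v1 1 0"
    unfolding valid_instance_def using met s1P s1Q apos by (auto simp: X_def v1_def)
  have val2: "valid_instance X d 2 v2 0 1"
    unfolding valid_instance_def using met s2P s2Q apos by (auto simp: X_def v2_def)
  have dis1: "distortion d 2 v1 1 0 1 = (a+2)/a" unfolding distortion_def s1P s1Q by simp
  have dis2: "distortion d 2 v2 0 1 1 = (a+2)/a" unfolding distortion_def s2P s2Q by simp
  show ?thesis
  proof (cases "mech 2 {1} {2}")
    case True
    then show ?thesis using val1 dis1 ratio A1 B1 by (intro exI[of _ X] exI[of _ d] exI[of _ 2] exI[of _ v1] exI[of _ 1] exI[of _ 0]) auto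
  next
    case False
    then show ?thesis using val2 dis2 ratio A2 B2 by (intro exI[of _ X] exI[of _ d] exI[of _ 2] exI[of _ v2] exI[of _ 0] exI[of _ 1]) auto
  qed
qed

lemma lowerB:
  fixes \<tau> \<rho> :: real
  assumes t: "\<tau> \<ge> 1" and r: "\<rho> < \<tau>" and r2: "\<rho> \<ge> (\<tau> + 2) / \<tau>"
  shows "\<exists>(X :: nat set) d n v P Q. valid_instance X d n v P Q \<and>
              distortion d n v P Q
                (if mech n (setA \<tau> d n v P Q) (setB \<tau> d n v P Q) then P else Q) > \<rho>"
proof -
  have "(\<tau> + 2) / \<tau> > 1" using t by (simp add: field_simps)
  then have r1: "\<rho> > 1" using r2 by linarith
  define x where "x = (\<rho> + \<tau>) / 2"
  have xg: "x > 1" "x < \<tau>" "x > \<rho>" using r r1 unfolding x_def by auto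
  have tx: "\<not> (1 \<ge> \<tau> * x)" using xg t
    by (smt (verit) mult_less_cancel_left2 mult_le_cancel_right1)
  define f :: "nat \<Rightarrow> real" where "f = (\<lambda>k. if k = 0 then 0 else if k = 1 then 1 else - x)"
  define d where "d = (\<lambda>x y. \<bar>f x - f y\<bar>)"
  define X :: "nat set" where "X = {0,1,2}"
  have met: "metric_on X d" unfolding d_def
    by (rule line_metric) (use xg in \<open>auto simp: X_def f_def inj_on_def\<close>)
  define v :: "nat \<Rightarrow> nat" where "v = (\<lambda>i. 0)"
  have A1: "setA \<tau> d 1 v 2 1 = {}" unfolding setA_def d_def f_def v_def
    using xg t tx by auto
  have B1: "setB \<tau> d 1 v 2 1 = {}" unfolding setB_def d_def f_def v_def
    using xg t by auto
  have A2: "setA \<tau> d 1 v 1 2 = {}" unfolding setA_def d_def f_def v_def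
    using xg t by auto
  have B2: "setB \<tau> d 1 v 1 2 = {}" unfolding setB_def d_def f_def v_def
    using xg t tx by auto
  have s2: "SC d 1 v 2 = x" and s1: "SC d 1 v 1 = 1"
    unfolding SC1 d_def f_def v_def using xg by auto
  have val1: "valid_instance X d 1 v 2 1"
    unfolding valid_instance_def using met s1 s2 xg by (auto simp: X_def v_def)
  have val2: "valid_instance X d 1 v 1 2"
    unfolding valid_instance_def using met s1 s2 xg by (auto simp: X_def v_def)
  have dis1: "distortion d 1 v 2 1 2 = x" unfolding distortion_def s1 s2 using xg by simp
  have dis2: "distortion d 1 v 1 2 2 = x" unfolding distortion_def s1 s2 using xg by simp
  show ?thesis
  proof (cases "mech 1 {} {}")
    case True
    then show ?thesis using val1 dis1 xg A1 B1 by (intro exI[of _ X] exI[of _ d] exI[of _ 1] exI[of _ v] exI[of _ 2] exI[of _ 1]) auto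
  next
    case False
    then show ?thesis using val2 dis2 xg A2 B2 by (intro exI[of _ X] exI[of _ d] exI[of _ 1] exI[of _ v] exI[of _ 1] exI[of _ 2]) auto
  qed
qed

theorem mainTheorem7:
  fixes \<tau> :: real
  assumes "\<tau> \<ge> 1"
  shows "(\<forall>(X :: 'a set) d n v P Q. valid_instance X d n v P Q \<longrightarrow>
            distortion d n v P Q (WMR3 \<tau> d n v P Q) \<le> max ((\<tau> + 2) / \<tau>) \<tau>)
       \<and> (\<forall>mech :: nat \<Rightarrow> nat set \<Rightarrow> nat set \<Rightarrow> bool. \<forall>\<rho> < max ((\<tau> + 2) / \<tau>) \<tau>.
            \<exists>(X :: nat set) d n v P Q. valid_instance X d n v P Q \<and>
              distortion d n v P Q
                (if mech n (setA \<tau> d n v P Q) (setB \<tau> d n v P Q) then P else Q) > \<rho>)"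
proof (intro conjI allI impI)
  fix X :: "'a set" and d n v P Q
  assume val: "valid_instance X d n v P Q"
  define M where "M = max ((\<tau> + 2) / \<tau>) \<tau>"
  have "\<tau> \<le> M" unfolding M_def by simp
  then have M1: "M \<ge> 1" using assms by linarith
  have met: "metric_on X d" and vX: "v ` {1..n} \<subseteq> X" and PX: "P \<in> X" and QX: "Q \<in> X"
    and pos: "0 < min (SC d n v P) (SC d n v Q)" using val unfolding valid_instance_def by blast+
  have gen: "SC d n v W / min (SC d n v W) (SC d n v Z) \<le> M"
    if "SC d n v W \<le> M * SC d n v Z" "0 < min (SC d n v W) (SC d n v Z)" for W Z
  proof (cases "SC d n v W \<le> SC d n v Z")
    case True
    then have mz: "min (SC d n v W) (SC d n v Z) = SC d n v W" by simp
    have "SC d n v W > 0" using that(2) mz by simp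
    then have "SC d n v W / min (SC d n v W) (SC d n v Z) = 1" unfolding mz by simp
    then show ?thesis using M1 by simp
  next
    case False
    then have mz: "min (SC d n v W) (SC d n v Z) = SC d n v Z" by simp
    have "SC d n v Z > 0" using that(2) mz by simp
    then show ?thesis unfolding mz using that(1) by (simp add: pos_divide_le_eq)
  qed
  show "distortion d n v P Q (WMR3 \<tau> d n v P Q) \<le> max ((\<tau> + 2) / \<tau>) \<tau>"
  proof (cases "card (setA \<tau> d n v P Q) \<ge> card (setB \<tau> d n v P Q)")
    case True
    have "SC d n v P \<le> M * SC d n v Q" by (rule upper[OF assms M_def met vX PX QX True])
    then have le: "SC d n v P / min (SC d n v P) (SC d n v Q) \<le> M" by (rule gen[of P Q, OF _ pos])
    have w: "WMR3 \<tau> d n v P Q = P" unfolding WMR3_def using True by (rule if_P)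
    show ?thesis unfolding distortion_def w M_def[symmetric] by (rule le)
  next
    case False
    have e1: "setB \<tau> d n v Q P = setA \<tau> d n v P Q" by (rule swapB)
    have e2: "setA \<tau> d n v Q P = setB \<tau> d n v P Q" by (rule swapA)
    have c: "card (setB \<tau> d n v Q P) \<le> card (setA \<tau> d n v Q P)" using False
      unfolding e1 e2 by linarith
    have "SC d n v Q \<le> M * SC d n v P" by (rule upper[OF assms M_def met vX QX PX c])
    moreover have "0 < min (SC d n v Q) (SC d n v P)" using pos by (simp add: min.commute)
    ultimately have le0: "SC d n v Q / min (SC d n v Q) (SC d n v P) \<le> M" by (rule gen)
    have le: "SC d n v Q / min (SC d n v P) (SC d n v Q) \<le> M" using le0 by (simp only: min.commute)
    have w: "WMR3 \<tau> d n v P Q = Q" unfolding WMR3_def using False by (rule if_not_P)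
    show ?thesis unfolding distortion_def w M_def[symmetric] by (rule le)
  qed
next
  fix mech :: "nat \<Rightarrow> nat set \<Rightarrow> nat set \<Rightarrow> bool" and \<rho> :: real
  assume "\<rho> < max ((\<tau> + 2) / \<tau>) \<tau>"
  then consider "\<rho> < (\<tau> + 2) / \<tau>" | "\<rho> < \<tau>" "\<rho> \<ge> (\<tau> + 2) / \<tau>" by linarith
  then show "\<exists>(X :: nat set) d n v P Q. valid_instance X d n v P Q \<and>
              distortion d n v P Q
                (if mech n (setA \<tau> d n v P Q) (setB \<tau> d n v P Q) then P else Q) > \<rho>"
  proof cases
    case 1 then show ?thesis by (rule lowerA[OF assms])
  next
    case 2 then show ?thesis by (rule lowerB[OF assms])
  qed
qed

end
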